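(* Let $\lambda\in\mathbb C\setminus(\mathbb Z\setminus\{0\})$, with notation as in the context, and let $\Omega=2YX+\frac12H^2+H$ act on $\mathfrak{gl}(\lambda)$ via the adjoint action of $\mathfrak{sl}(2)\subset\mathfrak{gl}(\lambda)$. (i) $\Omega$ is self-adjoint with respect to $\langle u,v\rangle=\mathrm{tr}(uv)$, and for $k\in\mathbb Z_{\ge0}$, $l\in\mathbb Z$, $|l|\le k$, the element $e_{kl}=(\mathrm{ad}\,Y)^{k-l}(X^k)$ (equal to $X^lf_{kl}(H)$ for $l\ge0$) is an eigenvector of $\Omega$ with eigenvalue $2k(k+1)$. For $0\le l\le k$ the polynomials $f_{kl}$ satisfy $$T_0(H)\nabla\triangle(f)-(l+1)(H+l)\triangle(f)+(k-l)(k+l+1)f=0,$$ and $f_{kl}=\dfrac{\nabla^{k-l}(T_1\cdots T_k)}{T_1\cdots T_l}$ if $l>0$, $f_{k0}=\nabla^k(T_1\cdots T_k)$. (ii) For $0\le l\le k$, $\langle f_{kl},f_{kl}\rangle_l:=\mathrm{tr}\big(f_{kl}(H)^2T_1(H)\cdots T_l(H)\big)$ equals $\dfrac{(k-l)!}{(k+l)!}\dfrac{(k!)^2}{2k+1}\lambda(\lambda^2-1^2)\cdots(\lambda^2-k^2)$ if $\lambda\neq0$, and $(-1)^k\dfrac{(k-l)!}{(k+l)!}\dfrac{(k!)^4}{2k+1}$ if $\lambda=0$.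
   Context: $\mathfrak{sl}(2)$ has basis $X,H,Y$ with $[X,Y]=H$, $[H,X]=2X$, $[H,Y]=-2Y$. $\mathfrak A_\lambda=U(\mathfrak{sl}(2))/I_\lambda$, $I_\lambda$ the two-sided ideal generated by $\Omega-\frac12(\lambda^2-1)$; in $\mathfrak A_\lambda$, $XY=\frac14(\lambda^2-(H-1)^2)$. $\mathfrak{gl}(\lambda)$ is $\mathfrak A_\lambda$ with bracket $[a,b]=ab-ba$; the subalgebra generated by $H$ is $\mathbb C[H]$, and for $l>0$ each element of $H$-weight $2l$ is uniquely $X^lf(H)$, $f\in\mathbb C[H]$. The trace $\mathrm{tr}$ is the linear functional with $\mathrm{tr}(ab)=\mathrm{tr}(ba)$, vanishing on elements of nonzero $H$-weight, with $\sum_{m\ge0}\mathrm{tr}(H^m)\frac{t^m}{m!}=\frac{e^{\lambda t}-e^{-\lambda t}}{e^t-e^{-t}}$ for $\lambda\ne0$ and $\frac{2t}{e^t-e^{-t}}$ for $\lambda=0$. For $0\le l\le k$, $f_{kl}\in\mathbb C[H]$ is defined by $(\mathrm{ad}\,Y)^{k-l}(X^k)=X^lf_{kl}(H)$. $T_i(H)=\frac14(\lambda^2-(H+2i-1)^2)$ for $i\ge0$, empty products $=1$; $\triangle f(H)=f(H+2)-f(H)$, $\nabla f(H)=f(H)-f(H-2)$. *)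

theory Defs
  imports "HOL-Computational_Algebra.Polynomial" "HOL-Computational_Algebra.Formal_Power_Series"
begin

text \<open>Concrete model of the algebra A_lam = U(sl2)/I_lam.  An element is a finitely
supported function  a :: int => complex poly ; it stands for
  sum_{n>0} X^n (a n)(H) + (a 0)(H) + sum_{n<0} Y^(-n) (a n)(H).
Multiplication is determined by  f(H) X = X f(H+2),  f(H) Y = Y f(H-2),
X Y = T_0(H),  Y X = T_1(H)  (which encode [X,Y]=H, [H,X]=2X, [H,Y]=-2Y and
Omega = 1/2 (lam^2 - 1)).\<close>

definition shp :: "complex \<Rightarrow> complex poly \<Rightarrow> complex poly" where
  "shp c f = pcompose f [:c, 1:]"

definition Hpoly :: "complex poly" where
  "Hpoly = [:0, 1:]"

definition Tp :: "complex \<Rightarrow> int \<Rightarrow> complex poly" where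
  "Tp lam i = smult (1/4) ([:lam^2:] - [:of_int (2*i - 1), 1:]^2)"

definition delta_op :: "complex poly \<Rightarrow> complex poly" where
  "delta_op f = shp 2 f - f"

definition nabla_op :: "complex poly \<Rightarrow> complex poly" where
  "nabla_op f = f - shp (-2) f"

text \<open>e_i(1) e_j(1) = e_{i+j}(wcoef lam i j), where e_n(f) = X^n f(H) (n >= 0),
 e_n(f) = Y^(-n) f(H) (n < 0).  Uses X^b Y^b = prod_{s<b} T_0(H-2s) = prod_{s<b} T_{-s}(H)
 and Y^b X^b = prod_{s<b} T_1(H+2s) = prod_{s<b} T_{s+1}(H).\<close>
definition wcoef :: "complex \<Rightarrow> int \<Rightarrow> int \<Rightarrow> complex poly" where
  "wcoef lam i j =
     (if i > 0 \<and> j < 0 then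
        shp (2 * of_int (min 0 (i + j))) (\<Prod>s<nat (min i (-j)). Tp lam (- int s))
      else if i < 0 \<and> j > 0 then
        shp (2 * of_int (max 0 (i + j))) (\<Prod>s<nat (min (-i) j). Tp lam (int s + 1))
      else 1)"

type_synonym gl_elt = "int \<Rightarrow> complex poly"

definition gl_supp :: "gl_elt \<Rightarrow> int set" where
  "gl_supp a = {n. a n \<noteq> 0}"

definition gl_carrier :: "gl_elt set" where
  "gl_carrier = {a. finite (gl_supp a)}"

definition gl_zero :: gl_elt where
  "gl_zero = (\<lambda>n. 0)"

definition gl_add :: "gl_elt \<Rightarrow> gl_elt \<Rightarrow> gl_elt" where
  "gl_add a b = (\<lambda>n. a n + b n)"

definition gl_diff :: "gl_elt \<Rightarrow> gl_elt \<Rightarrow> gl_elt" where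
  "gl_diff a b = (\<lambda>n. a n - b n)"

definition gl_scale :: "complex \<Rightarrow> gl_elt \<Rightarrow> gl_elt" where
  "gl_scale c a = (\<lambda>n. smult c (a n))"

definition gl_mono :: "int \<Rightarrow> complex poly \<Rightarrow> gl_elt" where
  "gl_mono n f = (\<lambda>m. if m = n then f else 0)"

definition gl_mult :: "complex \<Rightarrow> gl_elt \<Rightarrow> gl_elt \<Rightarrow> gl_elt" where
  "gl_mult lam a b = (\<lambda>n. \<Sum>i\<in>gl_supp a. \<Sum>j\<in>gl_supp b.
      if i + j = n then wcoef lam i j * shp (2 * of_int j) (a i) * b j else 0)"

definition gl_X :: gl_elt where "gl_X = gl_mono 1 1"
definition gl_Y :: gl_elt where "gl_Y = gl_mono (-1) 1"
definition gl_H :: gl_elt where "gl_H = gl_mono 0 Hpoly"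

definition gl_br :: "complex \<Rightarrow> gl_elt \<Rightarrow> gl_elt \<Rightarrow> gl_elt" where
  "gl_br lam a b = gl_diff (gl_mult lam a b) (gl_mult lam b a)"

definition Omega_ad :: "complex \<Rightarrow> gl_elt \<Rightarrow> gl_elt" where
  "Omega_ad lam u =
     gl_add (gl_add (gl_scale 2 (gl_br lam gl_Y (gl_br lam gl_X u)))
                    (gl_scale (1/2) (gl_br lam gl_H (gl_br lam gl_H u))))
            (gl_br lam gl_H u)"

text \<open>Trace: generating function of tr(H^m)\<close>
definition tr_gen :: "complex \<Rightarrow> complex fps" where
  "tr_gen lam = (if lam \<noteq> 0
      then (fps_exp lam - fps_exp (- lam)) div (fps_exp 1 - fps_exp (- 1))
      else (2 * fps_X) div (fps_exp 1 - fps_exp (- 1)))"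

definition trH :: "complex \<Rightarrow> nat \<Rightarrow> complex" where
  "trH lam m = fact m * fps_nth (tr_gen lam) m"

definition tr_poly :: "complex \<Rightarrow> complex poly \<Rightarrow> complex" where
  "tr_poly lam p = (\<Sum>m\<le>degree p. coeff p m * trH lam m)"

definition gl_tr :: "complex \<Rightarrow> gl_elt \<Rightarrow> complex" where
  "gl_tr lam a = tr_poly lam (a 0)"

definition ekl :: "complex \<Rightarrow> nat \<Rightarrow> int \<Rightarrow> gl_elt" where
  "ekl lam k l = ((gl_br lam gl_Y) ^^ nat (int k - l)) (gl_mono (int k) 1)"

text \<open>f_{kl}: the polynomial with e_{kl} = X^l f_{kl}(H), 0 <= l <= k\<close>
definition fkl :: "complex \<Rightarrow> nat \<Rightarrow> nat \<Rightarrow> complex poly" where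
  "fkl lam k l = ekl lam k (int l) (int l)"

end

theory Submission
  imports Defs
begin

lemma tr_poly_bound:
  assumes "degree p < N"
  shows "tr_poly lam p = (\<Sum>m<N. coeff p m * trH lam m)"
proof -
  have "tr_poly lam p = (\<Sum>m\<in>{..degree p}. coeff p m * trH lam m)" by (simp add: tr_poly_def)
  also have "\<dots> = (\<Sum>m<N. coeff p m * trH lam m)"
    by (rule sum.mono_neutral_left) (use assms in \<open>auto simp: coeff_eq_0\<close>)
  finally show ?thesis .
qed

lemma tr_poly_add: "tr_poly lam (p + q) = tr_poly lam p + tr_poly lam q"
proof -
  define N where "N = Suc (max (degree p) (degree q))"
  have "degree (p+q) < N" unfolding N_def using degree_add_le_max[of p q] by linarith
  then show ?thesis
    by (simp add: tr_poly_bound[where p=p and N=N] tr_poly_bound[where p=q and N=N] tr_poly_bound[where p="p+q" and N=N] N_def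
        sum.distrib algebra_simps)
qed

lemma tr_poly_smult: "tr_poly lam (smult c p) = c * tr_poly lam p"
proof -
  have "degree (smult c p) < Suc (degree p)" by (simp add: le_imp_less_Suc)
  then show ?thesis
    by (simp add: tr_poly_bound[where p=p and N="Suc (degree p)"] tr_poly_bound[where p="smult c p" and N="Suc (degree p)"]
        sum_distrib_left algebra_simps)
qed

lemma tr_poly_0[simp]: "tr_poly lam 0 = 0"
  by (simp add: tr_poly_def)

lemma tr_poly_uminus: "tr_poly lam (- p) = - tr_poly lam p"
  using tr_poly_smult[of lam "-1" p] by simp

lemma tr_poly_diff: "tr_poly lam (p - q) = tr_poly lam p - tr_poly lam q"
  using tr_poly_add[of lam p "-q"] tr_poly_uminus[of lam q] by simp

lemma tr_poly_sum: "tr_poly lam (\<Sum>i\<in>S. f i) = (\<Sum>i\<in>S. tr_poly lam (f i))"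
  by (induction S rule: infinite_finite_induct) (auto simp: tr_poly_add)

lemma gexp_nth: "fps_nth (fps_exp (1::complex) - fps_exp (-1)) j = (1 - (-1)^j) / fact j"
  by (simp add: diff_divide_distrib power_one)

lemma gexp_ne0: "fps_exp (1::complex) - fps_exp (-1) \<noteq> 0"
proof
  assume "fps_exp (1::complex) - fps_exp (-1) = 0"
  then have "fps_nth (fps_exp (1::complex) - fps_exp (-1)) 1 = 0" by simp
  then show False by (simp add: gexp_nth)
qed

lemma gexp_subdeg: "subdegree (fps_exp (1::complex) - fps_exp (-1)) = 1"
  by (rule subdegreeI) (auto simp: gexp_nth)

lemma trH_gen_rec:
  assumes "tr_gen lam * (fps_exp 1 - fps_exp (-1)) = F"
  shows "(\<Sum>m\<le>n. of_nat (n choose m) * (1 - (-1)^(n-m)) * trH lam m) = fact n * fps_nth F n"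
proof -
  have "fps_nth F n = (\<Sum>i=0..n. fps_nth (tr_gen lam) i * ((1 - (-1)^(n-i)) / fact (n-i)))"
    using assms[symmetric] by (simp add: fps_mult_nth gexp_nth diff_divide_distrib)
  then have "fact n * fps_nth F n = (\<Sum>i=0..n. fact n * (fps_nth (tr_gen lam) i * ((1 - (-1)^(n-i)) / fact (n-i))))"
    by (simp add: sum_distrib_left)
  also have "\<dots> = (\<Sum>m\<le>n. of_nat (n choose m) * (1 - (-1)^(n-m)) * trH lam m)"
    unfolding atLeast0AtMost
  proof (rule sum.cong[OF refl])
    fix m assume "m \<in> {..n}"
    then have mn: "m \<le> n" by simp
    show "fact n * (fps_nth (tr_gen lam) m * ((1 - (-1) ^ (n - m)) / fact (n - m))) =
          of_nat (n choose m) * (1 - (-1) ^ (n - m)) * trH lam m"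
      unfolding binomial_fact[OF mn] trH_def
      by (simp add: field_simps)
  qed
  finally show ?thesis by simp
qed

lemma trH_rec_ne0:
  assumes "lam \<noteq> 0"
  shows "(\<Sum>m\<le>n. of_nat (n choose m) * (1 - (-1)^(n-m)) * trH lam m) = lam^n - (-lam)^n"
proof -
  let ?f = "fps_exp lam - fps_exp (-lam)"
  have f1: "fps_nth ?f 1 = 2 * lam" by simp
  have fne: "?f \<noteq> 0" using f1 assms by (metis fps_zero_nth mult_eq_0_iff zero_neq_numeral)
  have "subdegree ?f \<ge> 1" by (rule subdegree_geI[OF fne]) auto
  then have "tr_gen lam * (fps_exp 1 - fps_exp (-1)) = ?f"
    using assms gexp_subdeg gexp_ne0 by (simp add: tr_gen_def fps_times_divide_eq)
  from trH_gen_rec[OF this, of n] show ?thesis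
    by (simp add: right_diff_distrib)
qed

lemma trH_rec_0:
  "(\<Sum>m\<le>n. of_nat (n choose m) * (1 - (-1)^(n-m)) * trH 0 m) = (if n = 1 then 2 else 0)"
proof -
  have "tr_gen 0 * (fps_exp 1 - fps_exp (-1)) = 2 * fps_X"
    using gexp_subdeg gexp_ne0 by (simp add: tr_gen_def fps_times_divide_eq)
  from trH_gen_rec[OF this, of n] show ?thesis
    by (cases "n = 1") (auto simp: numeral_fps_const)
qed

lemma pcompose_x: "pcompose [:0, 1:] (q::complex poly) = q"
  by (simp add: pcompose_pCons pcompose_1 pCons_one[symmetric] del: pCons_one)


lemma pcompose_xpow: "pcompose ([:0, 1:] ^ i) (q::complex poly) = q ^ i"
proof (induction i)
  case 0 then show ?case by (simp add: pcompose_1)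
next
  case (Suc i)
  have "pcompose ([:0, 1:] ^ Suc i) q = pcompose ([:0, 1:] * [:0, 1:] ^ i) q" by (simp only: power_Suc)
  also have "\<dots> = q * q ^ i" by (simp only: pcompose_mult pcompose_x Suc.IH)
  finally show ?case by simp
qed

lemma shp_expand: "shp c r = (\<Sum>i\<le>degree r. smult (coeff r i) ([:c, 1:] ^ i))"
proof -
  have "shp c r = pcompose (\<Sum>i\<le>degree r. monom (coeff r i) i) [:c, 1:]"
    by (simp add: shp_def poly_as_sum_of_monoms)
  also have "\<dots> = (\<Sum>i\<le>degree r. smult (coeff r i) ([:c, 1:] ^ i))"
    by (simp add: pcompose_sum monom_altdef pcompose_smult pcompose_xpow)
  finally show ?thesis .
qed

lemma tr_char_mono:
  "tr_poly lam ([:1,1:]^n - [:-1,1:]^n) = (\<Sum>m\<le>n. of_nat (n choose m) * (1 - (-1)^(n-m)) * trH lam m)"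
proof -
  have dd: "degree ([:c::complex,1:]^n) \<le> n" for c
    using degree_power_le[of "[:c,1:]" n] by simp
  have d: "degree ([:1::complex,1:]^n - [:-1,1:]^n) < Suc n"
    using degree_diff_le[OF dd dd] by (simp add: le_imp_less_Suc)
  show ?thesis
    unfolding tr_poly_bound[OF d] lessThan_Suc_atMost
    by (rule sum.cong) (auto simp: coeff_linear_poly_power algebra_simps)
qed

lemma tr_char:
  "tr_poly lam (shp 1 r - shp (-1) r) =
     (if lam \<noteq> 0 then poly r lam - poly r (-lam) else 2 * coeff r 1)"
proof -
  have "shp 1 r - shp (-1) r = (\<Sum>i\<le>degree r. smult (coeff r i) ([:1, 1:] ^ i - [:-1,1:]^i))"
    by (simp add: shp_expand sum_subtractf smult_diff_right)
  then have "tr_poly lam (shp 1 r - shp (-1) r) =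
     (\<Sum>i\<le>degree r. coeff r i * (\<Sum>m\<le>i. of_nat (i choose m) * (1 - (-1)^(i-m)) * trH lam m))"
    by (simp add: tr_poly_sum tr_poly_smult tr_char_mono)
  also have "\<dots> = (if lam \<noteq> 0 then poly r lam - poly r (-lam) else 2 * coeff r 1)"
  proof (cases "lam \<noteq> 0")
    case True
    have "\<And>i. (\<Sum>m\<le>i. of_nat (i choose m) * (1 - (-1)^(i-m)) * trH lam m) = lam^i - (-lam)^i"
      using True trH_rec_ne0 by blast
    then show ?thesis using True
      by (simp only: poly_altdef) (simp add: sum_subtractf right_diff_distrib)
  next
    case False
    then have "(\<Sum>i\<le>degree r. coeff r i * (\<Sum>m\<le>i. of_nat (i choose m) * (1 - (-1)^(i-m)) * trH lam m))
       = (\<Sum>i\<le>degree r. coeff r i * (if i = 1 then 2 else 0))"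
      by (simp add: trH_rec_0)
    also have "\<dots> = (\<Sum>i\<le>degree r. if i = 1 then 2 * coeff r 1 else 0)"
      by (rule sum.cong) auto
    also have "\<dots> = 2 * coeff r 1"
      by (simp add: sum.delta coeff_eq_0)
    finally show ?thesis using False by simp
  qed
  finally show ?thesis .
qed

lemma poly_shp[simp]: "poly (shp c p) x = poly p (x + c)"
  by (simp add: shp_def poly_pcompose add.commute)

lemma poly_eqI: "(\<And>x. poly p x = poly q x) \<Longrightarrow> p = (q::complex poly)"
  using poly_eq_poly_eq_iff by blast

lemma shp_shp[simp]: "shp a (shp b p) = shp (a + b) p"
  by (rule poly_eqI) (simp add: algebra_simps)

lemma shp_0c[simp]: "shp 0 p = p"
  by (simp add: shp_def)

lemma shp_add[simp]: "shp c (p + q) = shp c p + shp c q"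
  by (simp add: shp_def pcompose_add)
lemma shp_diff[simp]: "shp c (p - q) = shp c p - shp c q"
  by (simp add: shp_def pcompose_diff)
lemma shp_uminus[simp]: "shp c (- p) = - shp c p"
  by (simp add: shp_def pcompose_uminus)
lemma shp_mult[simp]: "shp c (p * q) = shp c p * shp c q"
  by (simp add: shp_def pcompose_mult)
lemma shp_smult[simp]: "shp c (smult a p) = smult a (shp c p)"
  by (simp add: shp_def pcompose_smult)
lemma shp_const[simp]: "shp c [:a:] = [:a:]"
  by (simp add: shp_def)
lemma shp_1[simp]: "shp c 1 = 1"
  by (simp add: shp_def pcompose_1)
lemma shp_zero[simp]: "shp c 0 = 0"
  by (simp add: shp_def)
lemma shp_prod: "shp c (\<Prod>i\<in>S. f i) = (\<Prod>i\<in>S. shp c (f i))"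
  by (simp add: shp_def pcompose_prod)
lemma shp_sum: "shp c (\<Sum>i\<in>S. f i) = (\<Sum>i\<in>S. shp c (f i))"
  by (simp add: shp_def pcompose_sum)
lemma shp_power[simp]: "shp c (p ^ n) = shp c p ^ n"
  by (induction n) simp_all
lemma pderiv_shp: "pderiv (shp c p) = shp c (pderiv p)"
  by (simp add: shp_def pderiv_pcompose pderiv_pCons)
lemma shp_eq_0_iff[simp]: "shp c p = 0 \<longleftrightarrow> p = 0"
proof
  assume "shp c p = 0"
  then have "shp (-c) (shp c p) = 0" by simp
  then show "p = 0" by simp
qed simp

definition bnd :: "complex \<Rightarrow> complex poly \<Rightarrow> complex" where
  "bnd lam P = (if lam \<noteq> 0 then poly P (lam - 1) - poly P (- lam - 1) else 2 * poly (pderiv P) (-1))"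

lemma tr_boundary: "tr_poly lam (P - shp (-2) P) = bnd lam P"
proof -
  define r where "r = shp (-1) P"
  have 1: "shp 1 r = P" "shp (-1) r = shp (-2) P" by (simp_all add: r_def)
  have 2: "coeff r 1 = poly (pderiv P) (-1)"
  proof -
    have "coeff r 1 = coeff (pderiv r) 0" by (simp add: coeff_pderiv)
    also have "\<dots> = poly (pderiv r) 0" by (simp add: poly_0_coeff_0)
    also have "\<dots> = poly (pderiv P) (-1)" by (simp add: r_def pderiv_shp)
    finally show ?thesis .
  qed
  show ?thesis using tr_char[of lam r] unfolding 1 2 bnd_def by (simp add: r_def)
qed

lemma tr_shift_inv:
  assumes "bnd lam P = 0"
  shows "tr_poly lam (shp (-2) P) = tr_poly lam P"
  using tr_boundary[of lam P] assms by (simp add: tr_poly_diff)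

lemma poly_Tp[simp]: "poly (Tp lam i) x = (lam^2 - (x + of_int (2*i - 1))^2) / 4"
  by (simp add: Tp_def power2_eq_square algebra_simps)

lemma shp_Tp: "c = 2 * of_int j \<Longrightarrow> shp c (Tp lam i) = Tp lam (i + j)"
  by (rule poly_eqI) (simp add: algebra_simps)

lemma shp_Tp_2[simp]: "shp 2 (Tp lam i) = Tp lam (i + 1)"
  by (rule poly_eqI) (simp add: algebra_simps)
lemma shp_Tp_m2[simp]: "shp (-2) (Tp lam i) = Tp lam (i - 1)"
  by (rule poly_eqI) (simp add: algebra_simps)
lemma shp_Tp_j[simp]: "shp (2 * of_int j) (Tp lam i) = Tp lam (i + j)"
  by (rule poly_eqI) (simp add: algebra_simps)

lemma pderiv_Tp: "poly (pderiv (Tp lam i)) x = - (x + of_int (2*i - 1)) / 2"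
  by (simp add: Tp_def pderiv_pCons pderiv_smult pderiv_diff pderiv_power_Suc power2_eq_square
      pderiv_mult algebra_simps)

lemma bnd_T0: "bnd lam (shp 2 (Tp lam 0 * p)) = 0"
proof (cases "lam = 0")
  case True
  have "poly (pderiv (shp 2 (Tp lam 0 * p))) (-1) = 0"
    using True by (simp add: pderiv_shp pderiv_mult pderiv_Tp)
  then show ?thesis using True by (simp add: bnd_def)
next
  case False
  then show ?thesis by (simp add: bnd_def algebra_simps power2_eq_square)
qed

lemma trace_prop: "tr_poly lam (Tp lam 1 * shp 2 p) = tr_poly lam (Tp lam 0 * p)"
proof -
  have "tr_poly lam (shp (-2) (shp 2 (Tp lam 0 * p))) = tr_poly lam (shp 2 (Tp lam 0 * p))"
    by (rule tr_shift_inv[OF bnd_T0])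
  then show ?thesis by simp
qed

lemma wcoef_m1_left: "wcoef lam (-1) m = (if m > 0 then Tp lam m else 1)"
proof (cases "m > 0")
  case True
  then have "min 1 m = 1" "max 0 (-1 + m) = m - 1" by auto
  moreover have "shp (2 * of_int (m - 1)) (Tp lam 1) = Tp lam m" by (subst shp_Tp[where j="m-1"]) auto
  ultimately show ?thesis using True by (simp add: wcoef_def del: shp_Tp_j)
qed (simp add: wcoef_def)

lemma wcoef_m1_right: "wcoef lam m (-1) = (if m > 0 then Tp lam 0 else 1)"
proof (cases "m > 0")
  case True
  then have "min m 1 = 1" "min 0 (m - 1) = 0" by auto
  then show ?thesis using True by (simp add: wcoef_def)
qed (simp add: wcoef_def)

lemma wcoef_1_left: "wcoef lam 1 m = (if m < 0 then Tp lam (m + 1) else 1)"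
proof (cases "m < 0")
  case True
  then have "min 1 (-m) = 1" "min 0 (1 + m) = m + 1" by auto
  moreover have "shp (2 * of_int (m + 1)) (Tp lam 0) = Tp lam (m + 1)" by (subst shp_Tp[where j="m+1"]) auto
  ultimately show ?thesis using True by (simp add: wcoef_def add.commute del: shp_Tp_j)
qed (simp add: wcoef_def)

lemma wcoef_1_right: "wcoef lam m 1 = (if m < 0 then Tp lam 1 else 1)"
proof (cases "m < 0")
  case True
  then have "min (-m) 1 = 1" "max 0 (m + 1) = 0" by auto
  then show ?thesis using True by (simp add: wcoef_def)
qed (simp add: wcoef_def)

lemma wcoef_0_left[simp]: "wcoef lam 0 j = 1" by (simp add: wcoef_def)
lemma wcoef_0_right[simp]: "wcoef lam i 0 = 1" by (simp add: wcoef_def)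

lemma gl_supp_mono: "gl_supp (gl_mono n f) = (if f = 0 then {} else {n})"
  by (auto simp: gl_supp_def gl_mono_def)

lemma gl_mono_carrier[simp]: "gl_mono n f \<in> gl_carrier"
  by (simp add: gl_carrier_def gl_supp_mono)

lemma gl_mono_same[simp]: "gl_mono n f n = f"
  by (simp add: gl_mono_def)

lemma carrier_finite: "a \<in> gl_carrier \<Longrightarrow> finite (gl_supp a)"
  by (simp add: gl_carrier_def)

lemma gl_mult_mono_left:
  assumes "b \<in> gl_carrier"
  shows "gl_mult lam (gl_mono i f) b n = wcoef lam i (n - i) * shp (2 * of_int (n - i)) f * b (n - i)"
proof (cases "f = 0")
  case True then show ?thesis by (simp add: gl_mult_def gl_supp_mono)
next
  case False
  have fin: "finite (gl_supp b)" using assms carrier_finite by blast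
  have "gl_mult lam (gl_mono i f) b n =
     (\<Sum>j\<in>gl_supp b. if i + j = n then wcoef lam i j * shp (2 * of_int j) f * b j else 0)"
    using False unfolding gl_mult_def by (subst gl_supp_mono) (simp cong: if_cong)
  also have "\<dots> =
     (\<Sum>j\<in>gl_supp b. if j = n - i then wcoef lam i j * shp (2 * of_int j) f * b j else 0)"
    by (rule sum.cong) auto
  also have "\<dots> = wcoef lam i (n - i) * shp (2 * of_int (n - i)) f * b (n - i)"
    using fin by (simp add: sum.delta gl_supp_def)
  finally show ?thesis .
qed

lemma gl_mult_mono_right:
  assumes "a \<in> gl_carrier"
  shows "gl_mult lam a (gl_mono j g) n = wcoef lam (n - j) j * shp (2 * of_int j) (a (n - j)) * g"
proof (cases "g = 0")
  case True then show ?thesis by (simp add: gl_mult_def gl_supp_mono)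
next
  case False
  have fin: "finite (gl_supp a)" using assms carrier_finite by blast
  have "gl_mult lam a (gl_mono j g) n =
     (\<Sum>i\<in>gl_supp a. if i + j = n then wcoef lam i j * shp (2 * of_int j) (a i) * g else 0)"
    using False unfolding gl_mult_def by (subst gl_supp_mono) (simp cong: if_cong)
  also have "\<dots> =
     (\<Sum>i\<in>gl_supp a. if i = n - j then wcoef lam i j * shp (2 * of_int j) (a i) * g else 0)"
    by (rule sum.cong) auto
  also have "\<dots> = wcoef lam (n - j) j * shp (2 * of_int j) (a (n - j)) * g"
    using fin by (simp add: sum.delta gl_supp_def)
  finally show ?thesis .
qed

definition Aop :: "complex \<Rightarrow> int \<Rightarrow> complex poly \<Rightarrow> complex poly" where
  "Aop lam m f = wcoef lam (-1) m * f - wcoef lam m (-1) * shp (-2) f"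

definition Bop :: "complex \<Rightarrow> int \<Rightarrow> complex poly \<Rightarrow> complex poly" where
  "Bop lam m f = wcoef lam 1 m * f - wcoef lam m 1 * shp 2 f"

definition Dop :: "complex \<Rightarrow> int \<Rightarrow> complex poly \<Rightarrow> complex poly" where
  "Dop lam n f = smult 2 (Aop lam (n + 1) (Bop lam n f))
      + smult (1/2) (smult (2 * of_int n) (smult (2 * of_int n) f)) + smult (2 * of_int n) f"

lemma Aop_alt: "Aop lam m f = (if m > 0 then Tp lam m * f - Tp lam 0 * shp (-2) f else f - shp (-2) f)"
  by (simp add: Aop_def wcoef_m1_left wcoef_m1_right)

lemma Bop_alt: "Bop lam m f = (if m < 0 then Tp lam (m + 1) * f - Tp lam 1 * shp 2 f else f - shp 2 f)"
  by (simp add: Bop_def wcoef_1_left wcoef_1_right)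

lemma Aop_0[simp]: "Aop lam m 0 = 0" by (simp add: Aop_def)
lemma Bop_0[simp]: "Bop lam m 0 = 0" by (simp add: Bop_def)

lemma carrier_shiftI:
  assumes "a \<in> gl_carrier" "\<And>m. F m 0 = 0"
  shows "(\<lambda>n. F n (a (n + c))) \<in> gl_carrier"
proof -
  have "gl_supp (\<lambda>n. F n (a (n + c))) \<subseteq> (\<lambda>m. m - c) ` gl_supp a"
  proof
    fix n assume "n \<in> gl_supp (\<lambda>n. F n (a (n + c)))"
    then have "a (n + c) \<noteq> 0" using assms(2) by (auto simp: gl_supp_def)
    then show "n \<in> (\<lambda>m. m - c) ` gl_supp a"
      by (auto simp: gl_supp_def image_iff intro!: bexI[of _ "n + c"])
  qed
  moreover have "finite ((\<lambda>m. m - c) ` gl_supp a)" using assms(1) carrier_finite by blast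
  ultimately show ?thesis unfolding gl_carrier_def by (blast intro: finite_subset)
qed

lemma gl_br_Y:
  assumes "a \<in> gl_carrier"
  shows "gl_br lam gl_Y a = (\<lambda>n. Aop lam (n + 1) (a (n + 1)))"
proof
  fix n
  show "gl_br lam gl_Y a n = Aop lam (n + 1) (a (n + 1))"
    using assms unfolding gl_br_def gl_diff_def gl_Y_def
    by (simp add: gl_mult_mono_left gl_mult_mono_right Aop_def mult.commute)
qed

lemma gl_br_X:
  assumes "a \<in> gl_carrier"
  shows "gl_br lam gl_X a = (\<lambda>n. Bop lam (n - 1) (a (n - 1)))"
proof
  fix n
  show "gl_br lam gl_X a n = Bop lam (n - 1) (a (n - 1))"
    using assms unfolding gl_br_def gl_diff_def gl_X_def
    by (simp add: gl_mult_mono_left gl_mult_mono_right Bop_def mult.commute)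
qed

lemma gl_br_H:
  assumes "a \<in> gl_carrier"
  shows "gl_br lam gl_H a = (\<lambda>n. smult (2 * of_int n) (a n))"
proof
  fix n
  have "shp (2 * of_int n) Hpoly * a n - a n * Hpoly = smult (2 * of_int n) (a n)"
    by (rule poly_eqI) (simp add: Hpoly_def algebra_simps)
  then show "gl_br lam gl_H a n = smult (2 * of_int n) (a n)"
    using assms unfolding gl_br_def gl_diff_def gl_H_def
    by (simp add: gl_mult_mono_left gl_mult_mono_right)
qed

lemma brY_carrier: "a \<in> gl_carrier \<Longrightarrow> gl_br lam gl_Y a \<in> gl_carrier"
  using carrier_shiftI[of a "\<lambda>n. Aop lam (n + 1)" 1] by (simp add: gl_br_Y)
lemma brX_carrier: "a \<in> gl_carrier \<Longrightarrow> gl_br lam gl_X a \<in> gl_carrier"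
  using carrier_shiftI[of a "\<lambda>n. Bop lam (n - 1)" "-1"] by (simp add: gl_br_X)
lemma brH_carrier: "a \<in> gl_carrier \<Longrightarrow> gl_br lam gl_H a \<in> gl_carrier"
  using carrier_shiftI[of a "\<lambda>n. smult (2 * of_int n)" 0] by (simp add: gl_br_H)

lemma Omega_ad_alt:
  assumes "u \<in> gl_carrier"
  shows "Omega_ad lam u = (\<lambda>n. Dop lam n (u n))"
proof -
  have c1: "gl_br lam gl_X u \<in> gl_carrier" "gl_br lam gl_H u \<in> gl_carrier"
    using assms brX_carrier brH_carrier by blast+
  show ?thesis
    unfolding Omega_ad_def gl_add_def gl_scale_def Dop_def
    using assms c1 by (simp add: gl_br_Y gl_br_X gl_br_H)
qed

lemma Omega_carrier: "u \<in> gl_carrier \<Longrightarrow> Omega_ad lam u \<in> gl_carrier"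
  using carrier_shiftI[of u "\<lambda>n. Dop lam n" 0] by (simp add: Omega_ad_alt Dop_def)

lemma brY_mono: "gl_br lam gl_Y (gl_mono m f) = gl_mono (m - 1) (Aop lam m f)"
  unfolding gl_br_Y[OF gl_mono_carrier] by (auto simp: gl_mono_def fun_eq_iff)

lemma Omega_mono: "Omega_ad lam (gl_mono m f) = gl_mono m (Dop lam m f)"
  unfolding Omega_ad_alt[OF gl_mono_carrier] by (auto simp: gl_mono_def fun_eq_iff Dop_def)

lemma scale_mono: "gl_scale c (gl_mono m f) = gl_mono m (smult c f)"
  by (rule ext) (simp add: gl_scale_def gl_mono_def)

lemma Aop_add: "Aop lam m (f + g) = Aop lam m f + Aop lam m g"
  by (simp add: Aop_def algebra_simps)
lemma Aop_smult: "Aop lam m (smult c f) = smult c (Aop lam m f)"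
  by (rule poly_eqI) (simp add: Aop_def algebra_simps)
lemma Bop_add: "Bop lam m (f + g) = Bop lam m f + Bop lam m g"
  by (simp add: Bop_def algebra_simps)
lemma Bop_smult: "Bop lam m (smult c f) = smult c (Bop lam m f)"
  by (rule poly_eqI) (simp add: Bop_def algebra_simps)

lemma comm_AB: "Bop lam (n - 1) (Aop lam n g) - Aop lam (n + 1) (Bop lam n g) = smult (2 * of_int n) g"
proof (rule poly_eqI)
  fix x
  consider "n > 0" | "n = 0" | "n < 0" by linarith
  then show "poly (Bop lam (n - 1) (Aop lam n g) - Aop lam (n + 1) (Bop lam n g)) x =
        poly (smult (2 * of_int n) g) x"
  proof cases
    case 1 then show ?thesis by (simp add: Aop_alt Bop_alt) (simp add: field_simps power2_eq_square)
  next
    case 2 then show ?thesis by (simp add: Aop_alt Bop_alt) (simp add: field_simps power2_eq_square)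
  next
    case 3 then show ?thesis by (simp add: Aop_alt Bop_alt) (simp add: field_simps power2_eq_square)
  qed
qed

lemma Dop_comm: "Dop lam (n - 1) (Aop lam n g) = Aop lam n (Dop lam n g)"
proof -
  have c: "Bop lam (n - 1) (Aop lam n g) = Aop lam (n + 1) (Bop lam n g) + smult (2 * of_int n) g"
    using comm_AB[of lam n g] by (simp add: algebra_simps)
  show ?thesis
    unfolding Dop_def c Aop_add Aop_smult
    by (rule poly_eqI) (simp add: algebra_simps)
qed

fun Gk :: "complex \<Rightarrow> int \<Rightarrow> nat \<Rightarrow> complex poly" where
  "Gk lam k 0 = 1"
| "Gk lam k (Suc j) = Aop lam (k - int j) (Gk lam k j)"

lemma brY_pow: "((gl_br lam gl_Y) ^^ j) (gl_mono k 1) = gl_mono (k - int j) (Gk lam k j)"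
  by (induction j) (simp_all add: brY_mono algebra_simps)

lemma Dop_Gk:
  assumes k0: "k \<ge> 0"
  shows "Dop lam (k - int j) (Gk lam k j) = smult (2 * of_int k * (of_int k + 1)) (Gk lam k j)"
proof (induction j)
  case 0
  show ?case using k0 by (simp add: Dop_def Bop_alt algebra_simps)
next
  case (Suc j)
  have "Dop lam (k - int (Suc j)) (Gk lam k (Suc j)) = Dop lam ((k - int j) - 1) (Aop lam (k - int j) (Gk lam k j))"
    by (simp add: algebra_simps)
  also have "\<dots> = Aop lam (k - int j) (Dop lam (k - int j) (Gk lam k j))" by (rule Dop_comm)
  also have "\<dots> = smult (2 * of_int k * (of_int k + 1)) (Gk lam k (Suc j))"
    by (simp add: Suc.IH Aop_smult)
  finally show ?case .
qed

definition TP :: "complex \<Rightarrow> int \<Rightarrow> nat \<Rightarrow> complex poly" where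
  "TP lam a n = (\<Prod>s<n. Tp lam (a + int s))"

lemma TP_0[simp]: "TP lam a 0 = 1" by (simp add: TP_def)

lemma TP_Suc_left: "TP lam a (Suc n) = Tp lam a * TP lam (a + 1) n"
  by (simp only: TP_def prod.lessThan_Suc_shift) (simp add: algebra_simps)

lemma TP_Suc_right: "TP lam a (Suc n) = TP lam a n * Tp lam (a + int n)"
  by (simp add: TP_def)

lemma shp_TP: "shp (2 * of_int j) (TP lam a n) = TP lam (a + j) n"
  unfolding TP_def shp_prod shp_Tp_j by (simp add: algebra_simps)

lemma shp_TP_2[simp]: "shp 2 (TP lam a n) = TP lam (a + 1) n"
  using shp_TP[of 1 lam a n] by simp

lemma shp_TP_m2[simp]: "shp (-2) (TP lam a n) = TP lam (a - 1) n"
  using shp_TP[of "-1" lam a n] by simp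

lemma prod_neg_TP: "(\<Prod>s<n. Tp lam (- int s)) = TP lam (1 - int n) n"
proof (induction n)
  case (Suc n)
  have "TP lam (1 - int (Suc n)) (Suc n) = Tp lam (- int n) * TP lam (1 - int n) n"
    by (simp add: TP_Suc_left algebra_simps)
  then show ?case using Suc by (simp add: algebra_simps)
qed simp

lemma prod_pos_TP: "(\<Prod>s<n. Tp lam (int s + 1)) = TP lam 1 n"
  by (simp add: TP_def algebra_simps)

definition wd :: "complex \<Rightarrow> int \<Rightarrow> complex poly" where
  "wd lam i = wcoef lam i (-i)"

lemma wd_alt: "wd lam i = (if i > 0 then TP lam (1 - i) (nat i) else if i < 0 then TP lam 1 (nat (- i)) else 1)"
proof -
  consider "i > 0" | "i < 0" | "i = 0" by linarith
  then show ?thesis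
  proof cases
    case 1
    then have "min i i = i" "min 0 (i + - i) = 0" by simp_all
    then show ?thesis using 1 prod_neg_TP[of lam "nat i"] by (simp add: wd_def wcoef_def)
  next
    case 2
    then show ?thesis using prod_pos_TP[of lam "nat (-i)"] by (simp add: wd_def wcoef_def)
  qed (simp add: wd_def)
qed

definition Kp :: "complex \<Rightarrow> int \<Rightarrow> complex poly \<Rightarrow> complex poly \<Rightarrow> complex" where
  "Kp lam i f g = tr_poly lam (wd lam i * shp (2 * of_int (- i)) f * g)"

lemma Kp_add1: "Kp lam i (f1 + f2) g = Kp lam i f1 g + Kp lam i f2 g"
  by (simp add: Kp_def algebra_simps tr_poly_add)
lemma Kp_add2: "Kp lam i f (g1 + g2) = Kp lam i f g1 + Kp lam i f g2"
  by (simp add: Kp_def algebra_simps tr_poly_add)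
lemma Kp_smult1: "Kp lam i (smult c f) g = c * Kp lam i f g"
  by (simp add: Kp_def tr_poly_smult[symmetric])
lemma Kp_smult2: "Kp lam i f (smult c g) = c * Kp lam i f g"
  by (simp add: Kp_def tr_poly_smult[symmetric])
lemma Kp_zero2[simp]: "Kp lam i f 0 = 0" by (simp add: Kp_def)
lemma Kp_zero1[simp]: "Kp lam i 0 g = 0" by (simp add: Kp_def)

lemma pair_formula:
  assumes "u \<in> gl_carrier" "v \<in> gl_carrier" "finite S" "gl_supp u \<subseteq> S"
  shows "gl_tr lam (gl_mult lam u v) = (\<Sum>i\<in>S. Kp lam i (u i) (v (- i)))"
proof -
  have fv: "finite (gl_supp v)" using assms(2) carrier_finite by blast
  have "gl_mult lam u v 0 = (\<Sum>i\<in>gl_supp u. wd lam i * shp (2 * of_int (- i)) (u i) * v (- i))"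
    unfolding gl_mult_def
  proof (rule sum.cong[OF refl])
    fix i
    have "(\<Sum>j\<in>gl_supp v. if i + j = 0 then wcoef lam i j * shp (2 * of_int j) (u i) * v j else 0)
        = (\<Sum>j\<in>gl_supp v. if j = - i then wcoef lam i j * shp (2 * of_int j) (u i) * v j else 0)"
      by (rule sum.cong) auto
    also have "\<dots> = wd lam i * shp (2 * of_int (- i)) (u i) * v (- i)"
      using fv by (simp add: sum.delta gl_supp_def wd_def)
    finally show "(\<Sum>j\<in>gl_supp v. if i + j = 0 then wcoef lam i j * shp (2 * of_int j) (u i) * v j else 0)
        = wd lam i * shp (2 * of_int (- i)) (u i) * v (- i)" .
  qed
  also have "\<dots> = (\<Sum>i\<in>S. wd lam i * shp (2 * of_int (- i)) (u i) * v (- i))"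
    by (rule sum.mono_neutral_left) (use assms in \<open>auto simp: gl_supp_def\<close>)
  finally show ?thesis by (simp add: gl_tr_def tr_poly_sum Kp_def)
qed

lemma tr_cancel:
  assumes "P1 + P2 = Tp lam 1 * shp 2 R - Tp lam 0 * R"
  shows "tr_poly lam P1 = - tr_poly lam P2"
proof -
  have "tr_poly lam P1 + tr_poly lam P2 = 0"
    using trace_prop[of lam R] by (simp add: tr_poly_add[symmetric] assms tr_poly_diff)
  then show ?thesis by (simp add: eq_neg_iff_add_eq_0)
qed

lemma TP_swap: "TP lam a n * Tp lam (a + int n) = Tp lam a * TP lam (a + 1) n"
  using TP_Suc_left[of lam a n] TP_Suc_right[of lam a n] by simp

lemma shp_Tp_nat[simp]:
  "shp (of_nat p * 2) (Tp lam i) = Tp lam (i + int p)"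
  "shp (- (of_nat p * 2)) (Tp lam i) = Tp lam (i - int p)"
  "shp (2 * of_nat p) (Tp lam i) = Tp lam (i + int p)"
  "shp (- (2 * of_nat p)) (Tp lam i) = Tp lam (i - int p)"
  by (rule poly_eqI; simp add: algebra_simps)+

lemma shp_TP_nat[simp]:
  "shp (of_nat p * 2) (TP lam a n) = TP lam (a + int p) n"
  "shp (- (of_nat p * 2)) (TP lam a n) = TP lam (a - int p) n"
  "shp (2 * of_nat p) (TP lam a n) = TP lam (a + int p) n"
  "shp (- (2 * of_nat p)) (TP lam a n) = TP lam (a - int p) n"
  using shp_TP[of "int p" lam a n] shp_TP[of "- int p" lam a n] by (simp_all add: algebra_simps)

lemma Yinv_pos:
  shows "Kp lam (int p) (Aop lam (int p + 1) f) g = - Kp lam (int p + 1) f (Aop lam (- int p) g)"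
proof -
  have w1: "wd lam (int p) = TP lam (1 - int p) p" by (cases "p = 0") (simp_all add: wd_alt)
  have w2: "wd lam (int p + 1) = TP lam (- int p) p * Tp lam 0"
    by (simp add: wd_alt TP_Suc_right nat_add_distrib algebra_simps)
  have sw: "Tp lam 0 * TP lam (- int p) p = Tp lam (- int p) * TP lam (1 - int p) p"
    using TP_swap[of lam "- int p" p] by (simp add: algebra_simps)
  define F where "F = shp (- 2 * of_nat p - 2) f"
  have f: "f = shp (2 * of_nat p + 2) F" by (simp add: F_def)
  have e1: "shp (2 * of_int (- int p)) f = shp 2 F" by (simp add: f)
  have e2: "shp (2 * of_int (- (int p + 1))) f = F" by (simp add: f algebra_simps)
  have e3: "shp (2 * of_int (- int p)) (Tp lam (int p + 1)) = Tp lam 1"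
    by (subst shp_Tp_j) simp
  have e4: "shp (2 * of_int (- int p)) (Tp lam 0) = Tp lam (- int p)"
    by (subst shp_Tp_j) simp
  show ?thesis
    unfolding Kp_def w1 w2 f
    apply (rule tr_cancel[where R = "TP lam (- int p) p * F * shp (-2) g"])
    apply (simp add: Aop_alt e3 e4 del: shp_Tp_j)
    using sw apply (simp add: algebra_simps)
    done
qed

lemma Yinv_neg:
  shows "Kp lam (- int q - 1) (Aop lam (- int q) f) g = - Kp lam (- int q) f (Aop lam (int q + 1) g)"
proof -
  have w1: "wd lam (- int q) = TP lam 1 q" by (cases "q = 0") (simp_all add: wd_alt)
  have w2: "wd lam (- int q - 1) = TP lam 1 q * Tp lam (int q + 1)"
    by (simp add: wd_alt TP_Suc_right nat_add_distrib algebra_simps)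
  have sw: "Tp lam 1 * TP lam 2 q = TP lam 1 q * Tp lam (int q + 1)"
    using TP_swap[of lam 1 q] by (simp add: algebra_simps)
  define F where "F = shp (2 * of_nat q) f"
  have f: "f = shp (- 2 * of_nat q) F" by (simp add: F_def)
  show ?thesis
    unfolding Kp_def w1 w2 f
    apply (rule tr_cancel[where R = "TP lam 1 q * F * shp (-2) g"])
    apply (simp add: Aop_alt)
    using sw apply (simp add: algebra_simps)
    done
qed

lemma Xinv_pos:
  shows "Kp lam (int p + 1) (Bop lam (int p) f) g = - Kp lam (int p) f (Bop lam (- int p - 1) g)"
proof -
  have w1: "wd lam (int p) = TP lam (1 - int p) p" by (cases "p = 0") (simp_all add: wd_alt)
  have w2: "wd lam (int p + 1) = TP lam (- int p) p * Tp lam 0"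
    by (simp add: wd_alt TP_Suc_right nat_add_distrib algebra_simps)
  have sw: "Tp lam 0 * TP lam (- int p) p = Tp lam (- int p) * TP lam (1 - int p) p"
    using TP_swap[of lam "- int p" p] by (simp add: algebra_simps)
  define F where "F = shp (- 2 * of_nat p - 2) f"
  have f: "f = shp (2 * of_nat p + 2) F" by (simp add: F_def)
  show ?thesis
    unfolding Kp_def w1 w2 f
    apply (rule tr_cancel[where R = "- (TP lam (- int p) p * F * g)"])
    apply (simp add: Bop_alt)
    using sw apply (simp add: algebra_simps)
    done
qed

lemma Xinv_neg:
  shows "Kp lam (- int q) (Bop lam (- int q - 1) f) g = - Kp lam (- int q - 1) f (Bop lam (int q) g)"
proof -
  have w1: "wd lam (- int q) = TP lam 1 q" by (cases "q = 0") (simp_all add: wd_alt)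
  have w2: "wd lam (- int q - 1) = TP lam 1 q * Tp lam (int q + 1)"
    by (simp add: wd_alt TP_Suc_right nat_add_distrib algebra_simps)
  have sw: "Tp lam 1 * TP lam 2 q = TP lam 1 q * Tp lam (int q + 1)"
    using TP_swap[of lam 1 q] by (simp add: algebra_simps)
  define F where "F = shp (2 * of_nat q) f"
  have f: "f = shp (- 2 * of_nat q) F" by (simp add: F_def)
  show ?thesis
    unfolding Kp_def w1 w2 f
    apply (rule tr_cancel[where R = "- (TP lam 1 q * F * g)"])
    apply (simp add: Bop_alt)
    using sw apply (simp add: algebra_simps)
    done
qed

lemma Yinv: "Kp lam (m - 1) (Aop lam m f) g = - Kp lam m f (Aop lam (1 - m) g)"
proof (cases "m \<ge> 1")
  case True
  define p where "p = nat (m - 1)"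
  have p: "m = int p + 1" using True by (simp add: p_def)
  show ?thesis using Yinv_pos[of lam p f g] by (simp add: p)
next
  case False
  define q where "q = nat (- m)"
  have q: "m = - int q" using False by (simp add: q_def)
  show ?thesis using Yinv_neg[of lam q f g] by (simp add: q algebra_simps)
qed

lemma Xinv: "Kp lam (m + 1) (Bop lam m f) g = - Kp lam m f (Bop lam (- m - 1) g)"
proof (cases "m \<ge> 0")
  case True
  define p where "p = nat m"
  have p: "m = int p" using True by (simp add: p_def)
  show ?thesis using Xinv_pos[of lam p f g] by (simp add: p)
next
  case False
  define q where "q = nat (- m - 1)"
  have q: "m = - int q - 1" using False by (simp add: q_def)
  show ?thesis using Xinv_neg[of lam q f g] by (simp add: q algebra_simps)
qed

lemma Dop_selfadj: "Kp lam i (Dop lam i f) g = Kp lam i f (Dop lam (- i) g)"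
proof -
  have 1: "Kp lam i (Aop lam (i + 1) (Bop lam i f)) g = - Kp lam (i + 1) (Bop lam i f) (Aop lam (- i) g)"
    using Yinv[of lam "i + 1" "Bop lam i f" g] by simp
  have 2: "Kp lam (i + 1) (Bop lam i f) (Aop lam (- i) g) = - Kp lam i f (Bop lam (- i - 1) (Aop lam (- i) g))"
    using Xinv[of lam i f "Aop lam (- i) g"] by simp
  have 3: "Bop lam (- i - 1) (Aop lam (- i) g) = Aop lam (- i + 1) (Bop lam (- i) g) + smult (2 * of_int (- i)) g"
    using comm_AB[of lam "- i" g] by (simp add: algebra_simps)
  show ?thesis
    unfolding Dop_def Kp_add1 Kp_add2 Kp_smult1 Kp_smult2 1 2 3
    by (simp add: algebra_simps)
qed

lemma Omega_selfadj:
  assumes "u \<in> gl_carrier" "v \<in> gl_carrier"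
  shows "gl_tr lam (gl_mult lam (Omega_ad lam u) v) = gl_tr lam (gl_mult lam u (Omega_ad lam v))"
proof -
  let ?S = "gl_supp u"
  have fin: "finite ?S" using assms carrier_finite by blast
  have sub: "gl_supp (Omega_ad lam u) \<subseteq> ?S"
    using assms(1) by (auto simp: gl_supp_def Omega_ad_alt Dop_def)
  have "gl_tr lam (gl_mult lam (Omega_ad lam u) v) = (\<Sum>i\<in>?S. Kp lam i (Omega_ad lam u i) (v (- i)))"
    by (rule pair_formula[OF Omega_carrier[OF assms(1)] assms(2) fin sub])
  also have "\<dots> = (\<Sum>i\<in>?S. Kp lam i (u i) (Omega_ad lam v (- i)))"
    using assms by (simp add: Omega_ad_alt Dop_selfadj)
  also have "\<dots> = gl_tr lam (gl_mult lam u (Omega_ad lam v))"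
    by (rule pair_formula[symmetric, OF assms(1) Omega_carrier[OF assms(2)] fin order_refl])
  finally show ?thesis .
qed

lemma ekl_alt:
  assumes "\<bar>l\<bar> \<le> int k"
  shows "ekl lam k l = gl_mono l (Gk lam (int k) (nat (int k - l)))"
proof -
  have "int k - int (nat (int k - l)) = l" using assms by simp
  then show ?thesis by (simp add: ekl_def brY_pow)
qed

lemma ekl_eigen:
  assumes "\<bar>l\<bar> \<le> int k"
  shows "Omega_ad lam (ekl lam k l) = gl_scale (2 * of_nat k * (of_nat k + 1)) (ekl lam k l)"
proof -
  have "Dop lam l (Gk lam (int k) (nat (int k - l))) =
        smult (2 * of_int (int k) * (of_int (int k) + 1)) (Gk lam (int k) (nat (int k - l)))"
  proof -
    have "int k - int (nat (int k - l)) = l" using assms by simp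
    then show ?thesis using Dop_Gk[of "int k" lam "nat (int k - l)"] by simp
  qed
  then show ?thesis
    unfolding ekl_alt[OF assms] Omega_mono scale_mono by simp
qed

lemma fkl_alt:
  assumes "l \<le> k"
  shows "fkl lam k l = Gk lam (int k) (k - l)"
proof -
  have "nat (int k - int l) = k - l" using assms by simp
  then show ?thesis using assms by (simp add: fkl_def ekl_alt)
qed

lemma ekl_fkl:
  assumes "l \<le> k"
  shows "ekl lam k (int l) = gl_mono (int l) (fkl lam k l)"
proof -
  have "nat (int k - int l) = k - l" using assms by simp
  then show ?thesis using assms by (simp add: fkl_alt ekl_alt)
qed

lemma fkl_eigen:
  assumes "l \<le> k"
  shows "Dop lam (int l) (fkl lam k l) = smult (2 * of_nat k * (of_nat k + 1)) (fkl lam k l)"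
  using Dop_Gk[of "int k" lam "k - l"] assms by (simp add: fkl_alt of_nat_diff)

lemma fkl_rec:
  assumes "l \<le> k"
  shows "Tp lam 0 * nabla_op (delta_op (fkl lam k l))
          - smult (of_nat (l + 1)) ([:of_nat l, 1:] * delta_op (fkl lam k l))
          + smult (of_nat ((k - l) * (k + l + 1))) (fkl lam k l) = 0"
proof -
  let ?f = "fkl lam k l"
  have e: "Dop lam (int l) ?f - smult (2 * of_nat k * (of_nat k + 1)) ?f = 0"
    using fkl_eigen[OF assms] by simp
  have "Tp lam 0 * nabla_op (delta_op ?f)
          - smult (of_nat (l + 1)) ([:of_nat l, 1:] * delta_op ?f)
          + smult (of_nat ((k - l) * (k + l + 1))) ?f
        = smult (-1/2) (Dop lam (int l) ?f - smult (2 * of_nat k * (of_nat k + 1)) ?f)"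
  proof (rule poly_eqI)
    fix x
    have kl: "of_nat ((k - l) * (k + l + 1)) = (of_nat k - of_nat l) * (of_nat k + of_nat l + (1::complex))"
      by (simp only: of_nat_mult of_nat_diff[OF assms] of_nat_add of_nat_1)
    show "poly (Tp lam 0 * nabla_op (delta_op ?f)
          - smult (of_nat (l + 1)) ([:of_nat l, 1:] * delta_op ?f)
          + smult (of_nat ((k - l) * (k + l + 1))) ?f) x
        = poly (smult (-1/2) (Dop lam (int l) ?f - smult (2 * of_nat k * (of_nat k + 1)) ?f)) x"
      unfolding kl
      by (simp add: nabla_op_def delta_op_def Dop_def Aop_alt Bop_alt)
         (simp add: field_simps power2_eq_square)
  qed
  then show ?thesis using e by simp
qed

lemma prod_Tp_TP: "(\<Prod>i\<in>{1..l}. Tp lam (int i)) = TP lam 1 l"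
proof (induction l)
  case (Suc l)
  have "{1..Suc l} = insert (Suc l) {1..l}" by auto
  then show ?case using Suc by (simp add: TP_Suc_right algebra_simps)
qed simp

lemma Gk_prod:
  assumes "j \<le> k"
  shows "Gk lam (int k) j * TP lam 1 (k - j) = (nabla_op ^^ j) (TP lam 1 k)"
  using assms
proof (induction j)
  case (Suc j)
  define l where "l = k - Suc j"
  have kj: "k - j = Suc l" using Suc.prems by (simp add: l_def)
  have ij: "int k - int j = int l + 1" using Suc.prems by (simp add: l_def)
  let ?G = "Gk lam (int k) j"
  have "(nabla_op ^^ Suc j) (TP lam 1 k) = nabla_op (?G * TP lam 1 (Suc l))"
    using Suc by (simp add: kj)
  also have "\<dots> = Gk lam (int k) (Suc j) * TP lam 1 l"
    unfolding nabla_op_def using TP_swap[of lam 0 l]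
    by (simp add: ij Aop_alt TP_Suc_right TP_Suc_left algebra_simps)
  finally show ?case by (simp add: l_def)
qed simp

lemma tr_adj:
  "tr_poly lam (Aop lam (int p + 1) f * g * TP lam 1 p) = tr_poly lam (f * Bop lam (int p) g * TP lam 1 (Suc p))"
proof -
  have "tr_poly lam (Aop lam (int p + 1) f * g * TP lam 1 p) = - tr_poly lam (- (f * Bop lam (int p) g * TP lam 1 (Suc p)))"
    apply (rule tr_cancel[where R = "shp (-2) f * g * TP lam 1 p"])
    apply (simp add: Aop_alt Bop_alt TP_Suc_right)
    using TP_swap[of lam 1 p] apply (simp add: algebra_simps)
    done
  then show ?thesis by (simp add: tr_poly_uminus)
qed

definition Nn :: "complex \<Rightarrow> nat \<Rightarrow> nat \<Rightarrow> complex" where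
  "Nn lam k j = tr_poly lam (Gk lam (int k) j ^ 2 * TP lam 1 (k - j))"

lemma Nn_step:
  assumes "j < k"
  shows "Nn lam k (Suc j) = of_nat ((j + 1) * (2 * k - j)) * Nn lam k j"
proof -
  define p where "p = k - Suc j"
  have kj: "k - j = Suc p" "k - Suc j = p" using assms by (simp_all add: p_def)
  have ij: "int k - int j = int p + 1" using assms by (simp add: p_def)
  define f where "f = Gk lam (int k) j"
  define f' where "f' = Gk lam (int k) (Suc j)"
  have f': "f' = Aop lam (int p + 1) f" by (simp add: f'_def f_def ij)
  have E: "Dop lam (int p + 1) f = smult (2 * of_int (int k) * (of_int (int k) + 1)) f"
    using Dop_Gk[of "int k" lam j] by (simp add: f_def ij)
  have X: "Aop lam (int p + 2) (Bop lam (int p + 1) f) =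
     smult (of_nat k * (of_nat k + 1) - (of_nat p + 1)^2 - (of_nat p + 1)) f"
  proof (rule poly_eqI)
    fix x
    have "poly (Dop lam (int p + 1) f) x = poly (smult (2 * of_int (int k) * (of_int (int k) + 1)) f) x"
      using E by simp
    then have "2 * poly (Aop lam (int p + 2) (Bop lam (int p + 1) f)) x =
      2 * poly (smult (of_nat k * (of_nat k + 1) - (of_nat p + 1)^2 - (of_nat p + 1)) f) x"
      by (simp add: Dop_def algebra_simps power2_eq_square)
    then show "poly (Aop lam (int p + 2) (Bop lam (int p + 1) f)) x =
      poly (smult (of_nat k * (of_nat k + 1) - (of_nat p + 1)^2 - (of_nat p + 1)) f) x"
      by simp
  qed
  have C: "Bop lam (int p) f' = Aop lam (int p + 2) (Bop lam (int p + 1) f) + smult (2 * of_int (int p + 1)) f"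
    using comm_AB[of lam "int p + 1" f] by (simp add: f' algebra_simps)
  have coef: "of_nat k * (of_nat k + 1) - (of_nat p + 1)^2 - (of_nat p + 1) + 2 * (of_nat p + 1)
      = (of_nat ((j + 1) * (2 * k - j)) :: complex)"
  proof -
    have k: "k = p + j + 1" using assms by (simp add: p_def)
    show ?thesis unfolding k by (simp add: of_nat_diff power2_eq_square algebra_simps)
  qed
  have B: "Bop lam (int p) f' = smult (of_nat ((j + 1) * (2 * k - j))) f"
    unfolding C X coef[symmetric] by (rule poly_eqI) (simp add: algebra_simps)
  have "Nn lam k (Suc j) = tr_poly lam (f' * f' * TP lam 1 p)"
    by (simp only: Nn_def kj power2_eq_square f'_def)
  also have "\<dots> = tr_poly lam (Aop lam (int p + 1) f * f' * TP lam 1 p)"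
    by (subst (1) f') (rule refl)
  also have "\<dots> = tr_poly lam (f * Bop lam (int p) f' * TP lam 1 (Suc p))" by (rule tr_adj)
  also have "\<dots> = of_nat ((j + 1) * (2 * k - j)) * Nn lam k j"
    by (simp add: B Nn_def kj f_def power2_eq_square tr_poly_smult[symmetric])
  finally show ?thesis .
qed

lemma Nn_closed:
  assumes "j \<le> k"
  shows "Nn lam k j = fact j * fact (2 * k) / fact (2 * k - j) * tr_poly lam (TP lam 1 k)"
  using assms
proof (induction j)
  case 0
  then show ?case by (simp add: Nn_def)
next
  case (Suc j)
  have jk: "j < k" using Suc.prems by simp
  have f: "(fact (2 * k - j) :: complex) = of_nat (2 * k - j) * fact (2 * k - Suc j)"
  proof -
    have "2 * k - j = Suc (2 * k - Suc j)" using jk by simp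
    then show ?thesis by (simp only: fact_Suc of_nat_mult)
  qed
  have nz: "(fact (2 * k - Suc j) :: complex) \<noteq> 0" by simp
  have nz2: "(of_nat (2 * k - j) :: complex) \<noteq> 0" using jk by (simp only: of_nat_eq_0_iff)
  have aux: "(c * a) * (d * e / (a * b) * t) = (c * d) * e / b * t" if "a \<noteq> 0" "b \<noteq> 0"
    for a b c d e t :: complex using that by (simp add: field_simps)
  have "Nn lam k (Suc j) = (of_nat (Suc j) * of_nat (2 * k - j)) *
      (fact j * fact (2 * k) / (of_nat (2 * k - j) * fact (2 * k - Suc j)) * tr_poly lam (TP lam 1 k))"
    unfolding Nn_step[OF jk] Suc.IH[OF less_imp_le[OF jk]] f by (simp only: of_nat_mult Suc_eq_plus1)
  also have "\<dots> = (of_nat (Suc j) * fact j) * fact (2 * k) / fact (2 * k - Suc j) * tr_poly lam (TP lam 1 k)"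
    by (rule aux[OF nz2 nz])
  finally show ?case by (simp only: fact_Suc)
qed

definition Gp :: "complex \<Rightarrow> nat \<Rightarrow> complex poly" where
  "Gp lam a = (\<Prod>i<a. [:(lam - 1 - 2 * of_nat i) / 2, - 1/2:])"
definition Fp :: "complex \<Rightarrow> nat \<Rightarrow> complex poly" where
  "Fp lam b = (\<Prod>i<b. [:(lam + 1 + 2 * of_nat i) / 2, 1/2:])"

lemma poly_Gp: "poly (Gp lam a) x = (\<Prod>i<a. (lam - x - 1 - 2 * of_nat i) / 2)"
  unfolding Gp_def poly_prod by (intro prod.cong) (simp_all add: field_simps)
lemma poly_Fp: "poly (Fp lam b) x = (\<Prod>i<b. (lam + x + 1 + 2 * of_nat i) / 2)"
  unfolding Fp_def poly_prod by (intro prod.cong) (simp_all add: field_simps)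

lemma TP_GF: "TP lam 1 k = Gp lam k * Fp lam k"
proof (rule poly_eqI)
  fix x
  have "poly (TP lam 1 k) x = (\<Prod>s<k. (lam^2 - (x + of_int (2 * (1 + int s) - 1))^2) / 4)"
    by (simp add: TP_def poly_prod)
  also have "\<dots> = (\<Prod>s<k. ((lam - x - 1 - 2 * of_nat s) / 2) * ((lam + x + 1 + 2 * of_nat s) / 2))"
    by (rule prod.cong) (simp_all add: field_simps power2_eq_square)
  also have "\<dots> = poly (Gp lam k * Fp lam k) x"
    by (simp only: prod.distrib poly_mult poly_Gp poly_Fp)
  finally show "poly (TP lam 1 k) x = poly (Gp lam k * Fp lam k) x" .
qed

lemma Fd_pt: "poly (Fp lam (Suc b)) (y - 2) = poly (Fp lam (Suc b)) y - of_nat (Suc b) * poly (Fp lam b) y"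
proof -
  let ?h = "\<lambda>i::nat. (lam + y + 1 + 2 * of_nat i) / 2"
  have 1: "poly (Fp lam (Suc b)) y = (\<Prod>i<b. ?h i) * ?h b" by (simp add: poly_Fp)
  have "poly (Fp lam (Suc b)) (y - 2) = (lam + y - 1) / 2 * (\<Prod>i<b. (lam + (y - 2) + 1 + 2 * of_nat (Suc i)) / 2)"
    unfolding poly_Fp prod.lessThan_Suc_shift by (simp add: algebra_simps)
  also have "(\<Prod>i<b. (lam + (y - 2) + 1 + 2 * of_nat (Suc i)) / 2) = (\<Prod>i<b. ?h i)"
    by (rule prod.cong) (simp_all add: algebra_simps)
  finally show ?thesis unfolding 1 poly_Fp[of lam b y] by (simp add: field_simps)
qed

lemma Gd_pt: "poly (Gp lam (Suc a)) (y - 2) = poly (Gp lam (Suc a)) y + of_nat (Suc a) * poly (Gp lam a) y"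
proof -
  let ?h = "\<lambda>i::nat. (lam - y - 1 - 2 * of_nat i) / 2"
  have 1: "poly (Gp lam (Suc a)) y = (\<Prod>i<a. ?h i) * ?h a" by (simp add: poly_Gp)
  have "poly (Gp lam (Suc a)) (y - 2) = (lam - y + 1) / 2 * (\<Prod>i<a. (lam - (y - 2) - 1 - 2 * of_nat (Suc i)) / 2)"
    unfolding poly_Gp prod.lessThan_Suc_shift by (simp add: algebra_simps)
  also have "(\<Prod>i<a. (lam - (y - 2) - 1 - 2 * of_nat (Suc i)) / 2) = (\<Prod>i<a. ?h i)"
    by (rule prod.cong) (simp_all add: algebra_simps)
  finally show ?thesis unfolding 1 poly_Gp[of lam a y] by (simp add: field_simps)
qed

lemma Gz: "c \<le> a \<Longrightarrow> poly (Gp lam (Suc a)) (lam - 1 - 2 * of_nat c) = 0"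
  unfolding poly_Gp by (rule prod_zero) (auto intro!: bexI[of _ c])

lemma Fz: "poly (Fp lam (Suc b)) (- lam - 1) = 0"
  unfolding poly_Fp by (rule prod_zero) (auto intro!: bexI[of _ 0])

definition Qv :: "complex \<Rightarrow> nat \<Rightarrow> nat \<Rightarrow> nat \<Rightarrow> complex" where
  "Qv lam a b c = tr_poly lam (shp (- 2 * of_nat c) (Gp lam a) * Fp lam b)"

lemma Qstep:
  assumes "c \<le> a"
  shows "of_nat (Suc a) * Qv lam a (Suc b) c = of_nat (Suc b) * Qv lam (Suc a) b (Suc c)"
proof -
  define P where "P = shp (- 2 * of_nat c) (Gp lam (Suc a)) * Fp lam (Suc b)"
  have bnd0: "bnd lam P = 0"
  proof (cases "lam = 0")
    case True
    have a: "poly (shp (- 2 * of_nat c) (Gp lam (Suc a))) (-1) = 0"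
      using Gz[OF assms, of lam] True by (simp add: algebra_simps)
    have b: "poly (Fp lam (Suc b)) (-1) = 0" using Fz[of lam b] True by simp
    show ?thesis using a b True by (simp add: bnd_def P_def pderiv_mult)
  next
    case False
    have a: "poly (shp (- 2 * of_nat c) (Gp lam (Suc a))) (lam - 1) = 0"
      using Gz[OF assms, of lam] by (simp add: algebra_simps)
    show ?thesis using a Fz[of lam b] False by (simp add: bnd_def P_def)
  qed
  have eq: "P - shp (-2) P = smult (of_nat (Suc b)) (shp (- 2 * of_nat (Suc c)) (Gp lam (Suc a)) * Fp lam b)
       - smult (of_nat (Suc a)) (shp (- 2 * of_nat c) (Gp lam a) * Fp lam (Suc b))"
  proof (rule poly_eqI)
    fix x
    show "poly (P - shp (-2) P) x = poly (smult (of_nat (Suc b)) (shp (- 2 * of_nat (Suc c)) (Gp lam (Suc a)) * Fp lam b)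
       - smult (of_nat (Suc a)) (shp (- 2 * of_nat c) (Gp lam a) * Fp lam (Suc b))) x"
    proof -
      have L: "poly (P - shp (-2) P) x = poly (Gp lam (Suc a)) (x - 2 * of_nat c) * poly (Fp lam (Suc b)) x
          - poly (Gp lam (Suc a)) (x - 2 * of_nat c - 2) * poly (Fp lam (Suc b)) (x - 2)"
        by (simp add: P_def algebra_simps)
      have R: "poly (smult (of_nat (Suc b)) (shp (- 2 * of_nat (Suc c)) (Gp lam (Suc a)) * Fp lam b)
         - smult (of_nat (Suc a)) (shp (- 2 * of_nat c) (Gp lam a) * Fp lam (Suc b))) x
         = of_nat (Suc b) * poly (Gp lam (Suc a)) (x - 2 * of_nat c - 2) * poly (Fp lam b) x
           - of_nat (Suc a) * poly (Gp lam a) (x - 2 * of_nat c) * poly (Fp lam (Suc b)) x"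
        by (simp add: algebra_simps)
      show ?thesis unfolding L R Fd_pt Gd_pt by (simp add: algebra_simps)
    qed
  qed
  have "0 = tr_poly lam (P - shp (-2) P)" using tr_boundary[of lam P] bnd0 by simp
  also have "\<dots> = of_nat (Suc b) * Qv lam (Suc a) b (Suc c) - of_nat (Suc a) * Qv lam a (Suc b) c"
    unfolding eq Qv_def by (simp add: tr_poly_diff tr_poly_smult)
  finally show ?thesis by simp
qed

lemma prod_sym:
  "(\<Prod>i<Suc (2 * k). z + of_nat k - of_nat i) = z * (\<Prod>j\<in>{1..k}. z^2 - (of_nat j)^2 :: complex)"
proof (induction k)
  case 0 then show ?case by simp
next
  case (Suc k)
  let ?f = "\<lambda>i::nat. z + of_nat (Suc k) - of_nat i"
  have e: "Suc (2 * Suc k) = Suc (Suc (Suc (2 * k)))" by simp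
  have "(\<Prod>i<Suc (2 * Suc k). ?f i) = ?f 0 * (\<Prod>i<Suc (Suc (2 * k)). ?f (Suc i))"
    unfolding e by (rule prod.lessThan_Suc_shift)
  also have "(\<Prod>i<Suc (Suc (2 * k)). ?f (Suc i)) = (\<Prod>i<Suc (2 * k). ?f (Suc i)) * ?f (Suc (Suc (2 * k)))"
    by (rule prod.lessThan_Suc)
  also have "(\<Prod>i<Suc (2 * k). ?f (Suc i)) = (\<Prod>i<Suc (2 * k). z + of_nat k - of_nat i)"
    by (rule prod.cong) simp_all
  also have "\<dots> = z * (\<Prod>j\<in>{1..k}. z^2 - (of_nat j)^2)" by (rule Suc.IH)
  finally have 1: "(\<Prod>i<Suc (2 * Suc k). ?f i) = ?f 0 * (z * (\<Prod>j\<in>{1..k}. z^2 - (of_nat j)^2) * ?f (Suc (Suc (2 * k))))" .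
  have 2: "(\<Prod>j\<in>{1..Suc k}. z^2 - (of_nat j)^2) = (\<Prod>j\<in>{1..k}. z^2 - (of_nat j)^2) * (z^2 - (of_nat (Suc k))^2)"
  proof -
    have "{1..Suc k} = insert (Suc k) {1..k}" by auto
    then show ?thesis by (simp add: mult.commute)
  qed
  have 3: "?f 0 * ?f (Suc (Suc (2 * k))) = z^2 - (of_nat (Suc k))^2"
    by (simp add: algebra_simps power2_eq_square)
  show ?case unfolding 1 2 3[symmetric] by (simp only: mult_ac)
qed

lemma prod_negsq: "(\<Prod>j\<in>{1..k}. - ((of_nat j)^2) :: complex) = (-1)^k * fact k ^ 2"
proof (induction k)
  case (Suc k)
  have "{1..Suc k} = insert (Suc k) {1..k}" by auto
  then show ?case using Suc by (simp add: algebra_simps power2_eq_square)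
qed simp

lemma twok1_nz: "(2 * of_nat k + 1 :: complex) \<noteq> 0"
proof -
  have "(2 * of_nat k + 1 :: complex) = of_nat (2 * k + 1)" by simp
  then show ?thesis by (simp only: of_nat_eq_0_iff)
qed

definition Zv :: "complex \<Rightarrow> nat \<Rightarrow> complex" where
  "Zv lam k = (if lam \<noteq> 0 then lam * (\<Prod>j\<in>{1..k}. lam^2 - (of_nat j)^2) else (-1)^k * fact k ^ 2)"

lemma Qfinal: "Qv lam (2 * k) 0 k = Zv lam k / (2 * of_nat k + 1)"
proof -
  define P where "P = shp (- 2 * of_nat k) (Gp lam (Suc (2 * k)))"
  have eq: "P - shp (-2) P = smult (- (2 * of_nat k + 1)) (shp (- 2 * of_nat k) (Gp lam (2 * k)))"
  proof (rule poly_eqI)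
    fix x
    have L: "poly (P - shp (-2) P) x = poly (Gp lam (Suc (2 * k))) (x - 2 * of_nat k)
          - poly (Gp lam (Suc (2 * k))) (x - 2 * of_nat k - 2)"
      by (simp add: P_def algebra_simps)
    show "poly (P - shp (-2) P) x = poly (smult (- (2 * of_nat k + 1)) (shp (- 2 * of_nat k) (Gp lam (2 * k)))) x"
      unfolding L Gd_pt by (simp add: algebra_simps)
  qed
  have B: "bnd lam P = - Zv lam k"
  proof (cases "lam = 0")
    case False
    have a: "poly P (lam - 1) = 0"
      using Gz[of k "2 * k" lam] by (simp add: P_def algebra_simps)
    have "poly P (- lam - 1) = (\<Prod>i<Suc (2 * k). lam + of_nat k - of_nat i)"
      unfolding P_def poly_shp poly_Gp by (rule prod.cong) (simp_all add: field_simps)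
    also have "\<dots> = lam * (\<Prod>j\<in>{1..k}. lam^2 - (of_nat j)^2)" by (rule prod_sym)
    finally show ?thesis using a False by (simp add: bnd_def Zv_def)
  next
    case True
    define A where "A = ([:- 1/2, - 1/2:] :: complex poly)"
    define R where "R = (\<Prod>j\<in>{1..k}. A^2 - [:(of_nat j)^2:])"
    have PAR: "P = A * R"
    proof (rule poly_eqI)
      fix x :: complex
      let ?z = "- (x + 1) / 2"
      have "poly P x = (\<Prod>i<Suc (2 * k). ?z + of_nat k - of_nat i)"
        unfolding P_def poly_shp poly_Gp using True by (intro prod.cong) (simp_all add: field_simps)
      also have "\<dots> = ?z * (\<Prod>j\<in>{1..k}. ?z^2 - (of_nat j)^2)" by (rule prod_sym)
      also have "\<dots> = poly (A * R) x"
      proof -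
        have pA: "poly A x = ?z" by (simp add: A_def field_simps)
        show ?thesis by (simp add: R_def poly_prod pA)
      qed
      finally show "poly P x = poly (A * R) x" .
    qed
    have RA: "poly R (-1) = (-1)^k * fact k ^ 2"
      unfolding R_def poly_prod by (simp add: A_def prod_negsq[symmetric])
    have "poly (pderiv P) (-1) = poly R (-1) * (- 1/2)"
    proof -
      have pA0: "poly A (-1) = 0" by (simp add: A_def)
      have dA: "pderiv A = [:- 1/2:]" by (simp add: A_def pderiv_pCons)
      show ?thesis unfolding PAR pderiv_mult poly_add poly_mult pA0 dA by simp
    qed
    then show ?thesis using True RA by (simp add: bnd_def Zv_def)
  qed
  have "- (2 * of_nat k + 1) * Qv lam (2 * k) 0 k = - Zv lam k"
    using tr_boundary[of lam P] unfolding eq B Qv_def by (simp add: tr_poly_smult Fp_def)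
  moreover have "(2 * of_nat k + 1 :: complex) \<noteq> 0"
    by (rule twok1_nz)
  ultimately show ?thesis by (simp add: field_simps)
qed

lemma Qiter:
  assumes "j \<le> k"
  shows "fact (k + j) * fact (k - j) * Qv lam k k 0 = fact k ^ 2 * Qv lam (k + j) (k - j) j"
  using assms
proof (induction j)
  case 0 then show ?case by (simp add: power2_eq_square)
next
  case (Suc j)
  have jk: "j < k" using Suc.prems by simp
  have kj: "k - j = Suc (k - Suc j)" using jk by simp
  have st: "of_nat (Suc (k + j)) * Qv lam (k + j) (k - j) j = of_nat (k - j) * Qv lam (k + Suc j) (k - Suc j) (Suc j)"
    using Qstep[of j "k + j" lam "k - Suc j"] kj by simp
  have f1: "(fact (k + Suc j) :: complex) = of_nat (Suc (k + j)) * fact (k + j)" by simp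
  have f2: "(fact (k - j) :: complex) = of_nat (k - j) * fact (k - Suc j)"
    by (simp only: kj fact_Suc of_nat_mult)
  have nz: "(of_nat (k - j) :: complex) \<noteq> 0" using jk by simp
  have "of_nat (k - j) * (fact (k + Suc j) * fact (k - Suc j) * Qv lam k k 0)
      = of_nat (Suc (k + j)) * (fact (k + j) * fact (k - j) * Qv lam k k 0)"
    unfolding f1 f2 by (simp add: algebra_simps)
  also have "\<dots> = of_nat (Suc (k + j)) * (fact k ^ 2 * Qv lam (k + j) (k - j) j)"
    using Suc.IH[OF less_imp_le[OF jk]] by simp
  also have "\<dots> = of_nat (k - j) * (fact k ^ 2 * Qv lam (k + Suc j) (k - Suc j) (Suc j))"
    using st by (simp add: algebra_simps)
  finally show ?case using nz by simp
qed

lemma tr_TP: "tr_poly lam (TP lam 1 k) = fact k ^ 2 / (fact (2 * k) * (2 * of_nat k + 1)) * Zv lam k"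
proof -
  have q: "Qv lam k k 0 = tr_poly lam (TP lam 1 k)" by (simp add: Qv_def TP_GF)
  have kk: "k + k = 2 * k" "k - k = 0" by simp_all
  have "fact (2 * k) * fact 0 * Qv lam k k 0 = fact k ^ 2 * Qv lam (2 * k) 0 k"
    using Qiter[of k k lam] unfolding kk by simp
  then have e0: "fact (2 * k) * tr_poly lam (TP lam 1 k) = fact k ^ 2 * (Zv lam k / (2 * of_nat k + 1))"
    unfolding q Qfinal by simp
  have nz1: "(2 * of_nat k + 1 :: complex) \<noteq> 0" by (rule twok1_nz)
  have e: "tr_poly lam (TP lam 1 k) * (fact (2 * k) * (2 * of_nat k + 1)) = fact k ^ 2 * Zv lam k"
  proof -
    have "tr_poly lam (TP lam 1 k) * (fact (2 * k) * (2 * of_nat k + 1))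
        = (fact (2 * k) * tr_poly lam (TP lam 1 k)) * (2 * of_nat k + 1)" by (simp only: mult_ac)
    also have "\<dots> = fact k ^ 2 * Zv lam k" unfolding e0 using nz1 by simp
    finally show ?thesis .
  qed
  have nz: "(fact (2 * k) * (2 * of_nat k + 1) :: complex) \<noteq> 0" using nz1 by simp
  show ?thesis unfolding times_divide_eq_left using nz e by (simp add: eq_divide_eq)
qed

lemma Zv_nz:
  assumes hlam: "lam \<notin> \<int> - {0}"
  shows "Zv lam k \<noteq> 0"
proof (cases "lam = 0")
  case True then show ?thesis by (simp add: Zv_def)
next
  case False
  then have ni: "lam \<notin> \<int>" using hlam by blast
  have "lam^2 - (of_nat j)^2 \<noteq> 0" for j :: nat
  proof
    assume "lam^2 - (of_nat j)^2 = 0"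
    then have "(lam - of_nat j) * (lam + of_nat j) = 0" by (simp add: algebra_simps power2_eq_square)
    then have "lam = of_nat j \<or> lam = - of_nat j" by (auto simp: add_eq_0_iff)
    then have "lam \<in> \<int>" by (auto intro: Ints_of_nat Ints_minus)
    with ni show False by simp
  qed
  then show ?thesis using False by (simp add: Zv_def)
qed

lemma trTP_nz:
  assumes hlam: "lam \<notin> \<int> - {0}"
  shows "tr_poly lam (TP lam 1 k) \<noteq> 0"
  unfolding tr_TP using Zv_nz[OF hlam] twok1_nz[of k] by simp

lemma Nn_nz:
  assumes hlam: "lam \<notin> \<int> - {0}" and "j \<le> k"
  shows "Nn lam k j \<noteq> 0"
  unfolding Nn_closed[OF assms(2)] using trTP_nz[OF hlam] by simp

lemma Gk_nz:
  assumes hlam: "lam \<notin> \<int> - {0}" and "j \<le> k"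
  shows "Gk lam (int k) j \<noteq> 0"
  using Nn_nz[OF assms] by (auto simp: Nn_def)

lemma Kp_chain:
  assumes "m \<le> k"
  shows "Kp lam (int m) (Gk lam (int k) (k - m)) (Gk lam (int k) (k + m)) = (-1)^m * Nn lam k k"
  using assms
proof (induction m)
  case 0
  then show ?case by (simp add: Kp_def Nn_def wd_def power2_eq_square)
next
  case (Suc m)
  have mk: "m < k" using Suc.prems by simp
  have a: "Gk lam (int k) (k - m) = Aop lam (int m + 1) (Gk lam (int k) (k - Suc m))"
  proof -
    have "k - m = Suc (k - Suc m)" using mk by simp
    moreover have "int k - int (k - Suc m) = int m + 1" using mk by simp
    ultimately show ?thesis by (simp add: algebra_simps)
  qed
  have b: "Gk lam (int k) (k + Suc m) = Aop lam (- int m) (Gk lam (int k) (k + m))" by simp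
  have "Kp lam (int m) (Aop lam (int m + 1) (Gk lam (int k) (k - Suc m))) (Gk lam (int k) (k + m))
      = - Kp lam (int m + 1) (Gk lam (int k) (k - Suc m)) (Aop lam (- int m) (Gk lam (int k) (k + m)))"
    using Yinv[of lam "int m + 1" "Gk lam (int k) (k - Suc m)" "Gk lam (int k) (k + m)"] by simp
  then show ?case using Suc.IH[OF less_imp_le[OF mk]] unfolding a b[symmetric] by (simp add: add.commute) (metis add.inverse_inverse)
qed

lemma gl_mono_nz: "f \<noteq> 0 \<Longrightarrow> gl_mono n f \<noteq> gl_zero"
  by (metis gl_mono_same gl_zero_def)

lemma ekl_nz:
  assumes hlam: "lam \<notin> \<int> - {0}" and "\<bar>l\<bar> \<le> int k"
  shows "ekl lam k l \<noteq> gl_zero"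
proof (cases "l \<ge> 0")
  case True
  have jk: "nat (int k - l) \<le> k" using True by simp
  show ?thesis unfolding ekl_alt[OF assms(2)] by (intro gl_mono_nz Gk_nz[OF hlam jk])
next
  case False
  define m where "m = nat (- l)"
  have mk: "m \<le> k" using assms(2) False by (simp add: m_def)
  have e: "nat (int k - l) = k + m" using False by (simp add: m_def)
  have "Kp lam (int m) (Gk lam (int k) (k - m)) (Gk lam (int k) (k + m)) \<noteq> 0"
    unfolding Kp_chain[OF mk] using Nn_nz[OF hlam, of k k] by simp
  then have "Gk lam (int k) (k + m) \<noteq> 0" by auto
  then show ?thesis unfolding ekl_alt[OF assms(2)] e by (rule gl_mono_nz)
qed

lemma norm_formula:
  assumes "l \<le> k"
  shows "tr_poly lam (fkl lam k l ^ 2 * (\<Prod>i\<in>{1..l}. Tp lam (int i))) =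
          (if lam \<noteq> 0
           then fact (k - l) / fact (k + l) * (fact k ^ 2 / (2 * of_nat k + 1))
                  * lam * (\<Prod>j\<in>{1..k}. lam^2 - of_nat j ^ 2)
           else (-1) ^ k * (fact (k - l) / fact (k + l)) * (fact k ^ 4 / (2 * of_nat k + 1)))"
proof -
  have kl: "k - (k - l) = l" "2 * k - (k - l) = k + l" using assms by simp_all
  have "tr_poly lam (fkl lam k l ^ 2 * (\<Prod>i\<in>{1..l}. Tp lam (int i))) = Nn lam k (k - l)"
    unfolding Nn_def fkl_alt[OF assms] prod_Tp_TP kl by simp
  also have "\<dots> = fact (k - l) * fact (2 * k) / fact (k + l) *
      (fact k ^ 2 / (fact (2 * k) * (2 * of_nat k + 1)) * Zv lam k)"
    unfolding Nn_closed[of "k - l" k lam, OF diff_le_self] kl tr_TP ..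
  also have "\<dots> = fact (k - l) / fact (k + l) * (fact k ^ 2 / (2 * of_nat k + 1)) * Zv lam k"
  proof -
    have aux: "a * b / c * (d / (b * e) * z) = a / c * (d / e) * z" if "b \<noteq> 0" for a b c d e z :: complex
      using that by (cases "c = 0"; cases "e = 0") (simp_all add: field_simps)
    have "(fact (2 * k) :: complex) \<noteq> 0" by simp
    then show ?thesis by (rule aux)
  qed
  finally have T: "tr_poly lam (fkl lam k l ^ 2 * (\<Prod>i\<in>{1..l}. Tp lam (int i))) =
      fact (k - l) / fact (k + l) * (fact k ^ 2 / (2 * of_nat k + 1)) * Zv lam k" .
  show ?thesis
  proof (cases "lam = 0")
    case True
    have p4: "(fact k ^ 4 :: complex) = fact k ^ 2 * fact k ^ 2" by (simp add: power_add[symmetric])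
    have nz: "(fact (k + l) :: complex) \<noteq> 0" "(2 * of_nat k + 1 :: complex) \<noteq> 0"
      using twok1_nz[of k] by simp_all
    show ?thesis unfolding T Zv_def p4 using True nz by (simp add: field_simps)
  next
    case False
    then show ?thesis unfolding T Zv_def by (simp add: mult.assoc)
  qed
qed

theorem theorem9p2:
  fixes lam :: complex
  assumes hlam: "lam \<notin> \<int> - {0}"
  shows
    "(\<forall>u\<in>gl_carrier. \<forall>v\<in>gl_carrier.
        gl_tr lam (gl_mult lam (Omega_ad lam u) v) = gl_tr lam (gl_mult lam u (Omega_ad lam v)))
   \<and> (\<forall>(k::nat) (l::int). \<bar>l\<bar> \<le> int k \<longrightarrow>
        ekl lam k l \<noteq> gl_zero \<and>
        Omega_ad lam (ekl lam k l) = gl_scale (2 * of_nat k * (of_nat k + 1)) (ekl lam k l))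
   \<and> (\<forall>(k::nat) (l::nat). l \<le> k \<longrightarrow>
        ekl lam k (int l) = gl_mono (int l) (fkl lam k l)
      \<and> Tp lam 0 * nabla_op (delta_op (fkl lam k l))
          - smult (of_nat (l + 1)) ([:of_nat l, 1:] * delta_op (fkl lam k l))
          + smult (of_nat ((k - l) * (k + l + 1))) (fkl lam k l) = 0
      \<and> fkl lam k l * (\<Prod>i\<in>{1..l}. Tp lam (int i))
          = (nabla_op ^^ (k - l)) (\<Prod>i\<in>{1..k}. Tp lam (int i)))
   \<and> (\<forall>(k::nat) (l::nat). l \<le> k \<longrightarrow>
        tr_poly lam (fkl lam k l ^ 2 * (\<Prod>i\<in>{1..l}. Tp lam (int i))) =
          (if lam \<noteq> 0
           then fact (k - l) / fact (k + l) * (fact k ^ 2 / (2 * of_nat k + 1))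
                  * lam * (\<Prod>j\<in>{1..k}. lam^2 - of_nat j ^ 2)
           else (-1) ^ k * (fact (k - l) / fact (k + l)) * (fact k ^ 4 / (2 * of_nat k + 1))))"
proof (intro conjI allI impI ballI)
  fix u v assume "u \<in> gl_carrier" "v \<in> gl_carrier"
  then show "gl_tr lam (gl_mult lam (Omega_ad lam u) v) = gl_tr lam (gl_mult lam u (Omega_ad lam v))"
    by (rule Omega_selfadj)
next
  fix k :: nat and l :: int assume "\<bar>l\<bar> \<le> int k"
  then show "ekl lam k l \<noteq> gl_zero" by (rule ekl_nz[OF hlam])
next
  fix k :: nat and l :: int assume "\<bar>l\<bar> \<le> int k"
  then show "Omega_ad lam (ekl lam k l) = gl_scale (2 * of_nat k * (of_nat k + 1)) (ekl lam k l)"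
    by (rule ekl_eigen)
next
  fix k l :: nat assume "l \<le> k"
  then show "ekl lam k (int l) = gl_mono (int l) (fkl lam k l)" by (rule ekl_fkl)
next
  fix k l :: nat assume "l \<le> k"
  then show "Tp lam 0 * nabla_op (delta_op (fkl lam k l))
          - smult (of_nat (l + 1)) ([:of_nat l, 1:] * delta_op (fkl lam k l))
          + smult (of_nat ((k - l) * (k + l + 1))) (fkl lam k l) = 0" by (rule fkl_rec)
next
  fix k l :: nat assume lk: "l \<le> k"
  have "k - (k - l) = l" using lk by simp
  then show "fkl lam k l * (\<Prod>i\<in>{1..l}. Tp lam (int i))
          = (nabla_op ^^ (k - l)) (\<Prod>i\<in>{1..k}. Tp lam (int i))"
    using Gk_prod[of "k - l" k lam] unfolding prod_Tp_TP fkl_alt[OF lk] by simp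
next
  fix k l :: nat assume "l \<le> k"
  then show "tr_poly lam (fkl lam k l ^ 2 * (\<Prod>i\<in>{1..l}. Tp lam (int i))) =
          (if lam \<noteq> 0
           then fact (k - l) / fact (k + l) * (fact k ^ 2 / (2 * of_nat k + 1))
                  * lam * (\<Prod>j\<in>{1..k}. lam^2 - of_nat j ^ 2)
           else (-1) ^ k * (fact (k - l) / fact (k + l)) * (fact k ^ 4 / (2 * of_nat k + 1)))"
    by (rule norm_formula)
qed

end
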